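(* Let $\alpha : I \to \mathbb{E}^4$ be an arclength parameterized curve (defined on an open interval $I$) with non-zero curvatures $\kappa_1,\kappa_2,\kappa_3$. Suppose two of its curvatures are constant. Then $\alpha$ is congruent to a rectifying curve if and only if one of the following holds: (i) $\kappa_1(s)=\kappa_1$, $\kappa_2(s)=\kappa_2$ are constants and $\kappa_3(s)=\pm \dfrac{1}{\sqrt{-s^2-2cs+c_1}}$ for some $\kappa_1,\kappa_2\in\mathbb{R}$ with $\kappa_1,\kappa_2>0$ and some $c,c_1\in\mathbb{R}$, where $-s^2-2cs+c_1>0$; (ii) $\kappa_2(s)=\kappa_2$, $\kappa_3(s)=\kappa_3$ are constants and $\kappa_1(s)=c_1\dfrac{\sin(\kappa_3 s+c_2)}{s+c}$ for some $\kappa_2>0$, $\kappa_3\in\mathbb{R}\setminus\{0\}$, $c,c_2\in\mathbb{R}$ and $c_1\in\mathbb{R}\setminus\{0\}$; (iii) $\kappa_1(s)=\kappa_1$, $\kappa_3(s)=\kappa_3$ are constants and $\kappa_2(s)=c_2(s+c)\sec(\kappa_3 s+c_1)$ for some $\kappa_1>0$, $\kappa_3\in\mathbb{R}\setminus\{0\}$, $c,c_1\in\mathbb{R}$ and $c_2\in\mathbb{R}\setminus\{0\}$.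
   Context: For an arclength parameterized curve $\alpha$ in $\mathbb{E}^4$ (sufficiently differentiable) one has the Frenet frame $T,N,B_1,B_2$ (orthonormal) with curvatures $\kappa_1,\kappa_2,\kappa_3$ satisfying $T'=\kappa_1 N$, $N'=-\kappa_1 T+\kappa_2 B_1$, $B_1'=-\kappa_2 N+\kappa_3 B_2$, $B_2'=-\kappa_3 B_1$, where $\kappa_1,\kappa_2>0$. "Non-zero curvatures" means no curvature is identically zero. A curve $\alpha$ is a rectifying curve if there is a fixed point $p$ such that for all $s$, $\langle \alpha(s)-p, N(s)\rangle = 0$, i.e. the orthogonal complement of $N(s)$ (through $\alpha(s)$) contains $p$. *)

theory Defs
  imports "HOL-Analysis.Analysis"
begin

definition frenet_curve_E4 ::
  "real set \<Rightarrow> (real \<Rightarrow> real^4) \<Rightarrow> (real \<Rightarrow> real^4) \<Rightarrow> (real \<Rightarrow> real^4) \<Rightarrow>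
   (real \<Rightarrow> real^4) \<Rightarrow> (real \<Rightarrow> real^4) \<Rightarrow>
   (real \<Rightarrow> real) \<Rightarrow> (real \<Rightarrow> real) \<Rightarrow> (real \<Rightarrow> real) \<Rightarrow> bool" where
  "frenet_curve_E4 I \<alpha> T N B1 B2 k1 k2 k3 \<longleftrightarrow>
     (\<forall>s\<in>I.
        (\<alpha> has_vector_derivative T s) (at s) \<and>
        (T has_vector_derivative (k1 s *\<^sub>R N s)) (at s) \<and>
        (N has_vector_derivative (- k1 s *\<^sub>R T s + k2 s *\<^sub>R B1 s)) (at s) \<and>
        (B1 has_vector_derivative (- k2 s *\<^sub>R N s + k3 s *\<^sub>R B2 s)) (at s) \<and>
        (B2 has_vector_derivative (- k3 s *\<^sub>R B1 s)) (at s) \<and>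
        norm (T s) = 1 \<and> norm (N s) = 1 \<and> norm (B1 s) = 1 \<and> norm (B2 s) = 1 \<and>
        T s \<bullet> N s = 0 \<and> T s \<bullet> B1 s = 0 \<and> T s \<bullet> B2 s = 0 \<and>
        N s \<bullet> B1 s = 0 \<and> N s \<bullet> B2 s = 0 \<and> B1 s \<bullet> B2 s = 0 \<and>
        k1 s > 0 \<and> k2 s > 0)"

definition unit_tangent :: "(real \<Rightarrow> 'a::real_normed_vector) \<Rightarrow> real \<Rightarrow> 'a" where
  "unit_tangent \<beta> s = (let v = vector_derivative \<beta> (at s) in v /\<^sub>R norm v)"

definition principal_normal :: "(real \<Rightarrow> 'a::real_normed_vector) \<Rightarrow> real \<Rightarrow> 'a" where
  "principal_normal \<beta> s = (let w = vector_derivative (unit_tangent \<beta>) (at s) in w /\<^sub>R norm w)"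

text \<open>Rectifying curve: some fixed point p lies in the rectifying space through beta(s)
  (the orthogonal complement of N(s)) for all s.\<close>
definition rectifying_curve :: "real set \<Rightarrow> (real \<Rightarrow> 'a::real_inner) \<Rightarrow> bool" where
  "rectifying_curve I \<beta> \<longleftrightarrow> (\<exists>p. \<forall>s\<in>I. (\<beta> s - p) \<bullet> principal_normal \<beta> s = 0)"

definition congruent_to_rectifying :: "real set \<Rightarrow> (real \<Rightarrow> 'a::real_inner) \<Rightarrow> bool" where
  "congruent_to_rectifying I \<alpha> \<longleftrightarrow>
     (\<exists>(A :: 'a \<Rightarrow> 'a) b. orthogonal_transformation A \<and> rectifying_curve I (\<lambda>s. A (\<alpha> s) + b))"

end

theory Submission
  imports Defs
begin


lemma inner_vd:
  fixes f g :: "real \<Rightarrow> 'a::real_inner"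
  assumes "(f has_vector_derivative f') (at x)" "(g has_vector_derivative g') (at x)"
  shows "((\<lambda>x. f x \<bullet> g x) has_real_derivative (f' \<bullet> g x + f x \<bullet> g')) (at x)"
proof -
  have "((\<lambda>x. f x \<bullet> g x) has_derivative (\<lambda>h. f x \<bullet> (h *\<^sub>R g') + (h *\<^sub>R f') \<bullet> g x)) (at x)"
    using assms unfolding has_vector_derivative_def by (intro derivative_eq_intros) auto
  then show ?thesis unfolding has_field_derivative_def
    by (rule has_derivative_eq_rhs) (auto simp: algebra_simps fun_eq_iff)
qed

lemma frenet_at:
  assumes "frenet_curve_E4 I \<alpha> T N B1 B2 k1 k2 k3" "s \<in> I"
  shows "(\<alpha> has_vector_derivative T s) (at s) \<and>
        (T has_vector_derivative (k1 s *\<^sub>R N s)) (at s) \<and>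
        (N has_vector_derivative (- k1 s *\<^sub>R T s + k2 s *\<^sub>R B1 s)) (at s) \<and>
        (B1 has_vector_derivative (- k2 s *\<^sub>R N s + k3 s *\<^sub>R B2 s)) (at s) \<and>
        (B2 has_vector_derivative (- k3 s *\<^sub>R B1 s)) (at s) \<and>
        norm (T s) = 1 \<and> norm (N s) = 1 \<and> norm (B1 s) = 1 \<and> norm (B2 s) = 1 \<and>
        T s \<bullet> N s = 0 \<and> T s \<bullet> B1 s = 0 \<and> T s \<bullet> B2 s = 0 \<and>
        N s \<bullet> B1 s = 0 \<and> N s \<bullet> B2 s = 0 \<and> B1 s \<bullet> B2 s = 0 \<and>
        k1 s > 0 \<and> k2 s > 0"
  using assms unfolding frenet_curve_E4_def by blast

lemma pn_lemma:
  fixes A :: "real^4 \<Rightarrow> real^4"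
  assumes fr: "frenet_curve_E4 I \<alpha> T N B1 B2 k1 k2 k3" and I: "open I" and s: "s \<in> I"
    and A: "orthogonal_transformation A"
  shows "principal_normal (\<lambda>s. A (\<alpha> s) + b) s = A (N s)"
proof -
  have lin: "linear A" using A by (simp add: orthogonal_transformation_linear)
  then have bl: "bounded_linear A" by (simp add: linear_conv_bounded_linear)
  have nA: "\<And>x. norm (A x) = norm x" using A by (simp add: orthogonal_transformation_norm)
  have ut: "unit_tangent (\<lambda>s. A (\<alpha> s) + b) t = A (T t)" if t: "t \<in> I" for t
  proof -
    have "((\<lambda>s. A (\<alpha> s)) has_vector_derivative A (T t)) (at t)"
      using bounded_linear.has_vector_derivative[OF bl] frenet_at[OF fr t] by blast
    then have "((\<lambda>s. A (\<alpha> s) + b) has_vector_derivative A (T t)) (at t)"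
      by (intro derivative_eq_intros) auto
    then have "vector_derivative (\<lambda>s. A (\<alpha> s) + b) (at t) = A (T t)"
      by (rule vector_derivative_at)
    then show ?thesis unfolding unit_tangent_def Let_def using nA frenet_at[OF fr t] by simp
  qed
  have "((\<lambda>s. A (T s)) has_vector_derivative A (k1 s *\<^sub>R N s)) (at s)"
    using bounded_linear.has_vector_derivative[OF bl] frenet_at[OF fr s] by blast
  then have "(unit_tangent (\<lambda>s. A (\<alpha> s) + b) has_vector_derivative A (k1 s *\<^sub>R N s)) (at s)"
    by (rule has_vector_derivative_transform_within_open[OF _ I s]) (simp add: ut)
  then have "vector_derivative (unit_tangent (\<lambda>s. A (\<alpha> s) + b)) (at s) = k1 s *\<^sub>R A (N s)"
    using vector_derivative_at linear_scale[OF lin] by metis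
  then show ?thesis unfolding principal_normal_def Let_def using nA frenet_at[OF fr s] by simp
qed

lemma rect_iff:
  fixes \<alpha> :: "real \<Rightarrow> real^4"
  assumes fr: "frenet_curve_E4 I \<alpha> T N B1 B2 k1 k2 k3" and I: "open I"
  shows "congruent_to_rectifying I \<alpha> \<longleftrightarrow> (\<exists>q. \<forall>s\<in>I. (\<alpha> s - q) \<bullet> N s = 0)"
proof
  assume "congruent_to_rectifying I \<alpha>"
  then obtain A b p where A: "orthogonal_transformation (A :: real^4 \<Rightarrow> real^4)"
    and r: "\<forall>s\<in>I. ((\<lambda>s. A (\<alpha> s) + b) s - p) \<bullet> principal_normal (\<lambda>s. A (\<alpha> s) + b) s = 0"
    unfolding congruent_to_rectifying_def rectifying_curve_def by blast
  obtain q where q: "A q = p - b" using orthogonal_transformation_surj[OF A] by (metis surjD)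
  have lin: "linear A" using A by (simp add: orthogonal_transformation_linear)
  have "(\<alpha> s - q) \<bullet> N s = 0" if s: "s \<in> I" for s
  proof -
    have "A (\<alpha> s) + b - p = A (\<alpha> s - q)" by (simp add: linear_diff[OF lin] q algebra_simps)
    then have "A (\<alpha> s - q) \<bullet> A (N s) = 0" using r s pn_lemma[OF fr I s A] by auto
    then show ?thesis using A by (simp add: orthogonal_transformation_def)
  qed
  then show "\<exists>q. \<forall>s\<in>I. (\<alpha> s - q) \<bullet> N s = 0" by blast
next
  assume "\<exists>q. \<forall>s\<in>I. (\<alpha> s - q) \<bullet> N s = 0"
  then obtain q where q: "\<forall>s\<in>I. (\<alpha> s - q) \<bullet> N s = 0" by blast
  have "rectifying_curve I (\<lambda>s. id (\<alpha> s) + 0)"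
    unfolding rectifying_curve_def
    using q pn_lemma[OF fr I _ orthogonal_transformation_id, of _ 0] by auto
  then show "congruent_to_rectifying I \<alpha>" unfolding congruent_to_rectifying_def
    using orthogonal_transformation_id[where 'a="real^4"] by (intro exI[of _ id] exI[of _ 0]) (simp add: id_def)
qed


lemma deriv_zero_on_open:
  fixes f :: "real \<Rightarrow> real"
  assumes "(f has_real_derivative D) (at s)" "open I" "s \<in> I" "\<And>x. x \<in> I \<Longrightarrow> f x = 0"
  shows "D = 0"
proof -
  have "((\<lambda>x. 0) has_real_derivative D) (at s)"
    by (rule has_field_derivative_transform_within_open[OF assms(1-3)]) (simp add: assms(4))
  moreover have "((\<lambda>x::real. 0::real) has_real_derivative 0) (at s)" by simp
  ultimately show ?thesis by (rule DERIV_unique)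
qed

lemma vec_alg:
  fixes T N B1 B2 :: "'a::real_vector" and a k1 k2 k3 m n :: real
  shows "T - (a *\<^sub>R (k1 *\<^sub>R N) + 1 *\<^sub>R T)
        - (m *\<^sub>R (- k2 *\<^sub>R N + k3 *\<^sub>R B2) + (k3 * n) *\<^sub>R B1)
        - (n *\<^sub>R (- k3 *\<^sub>R B1) + (- k3 * m) *\<^sub>R B2) = 
        (k2 * m - k1 * a) *\<^sub>R N"
  by (simp add: algebra_simps)

lemma rect_R:
  fixes \<alpha> :: "real \<Rightarrow> real^4"
  assumes fr: "frenet_curve_E4 I \<alpha> T N B1 B2 k1 k2 k3" and I: "open I" "is_interval I"
  shows "(\<exists>q. \<forall>s\<in>I. (\<alpha> s - q) \<bullet> N s = 0) \<longleftrightarrow>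
    (\<exists>c \<mu> \<nu>. \<forall>s\<in>I. (\<mu> has_real_derivative k3 s * \<nu> s) (at s) \<and>
        (\<nu> has_real_derivative - k3 s * \<mu> s) (at s) \<and> k2 s * \<mu> s = k1 s * (s + c))"
proof
  have cvx: "convex I" using I(2) by (rule is_interval_convex)
  assume "\<exists>q. \<forall>s\<in>I. (\<alpha> s - q) \<bullet> N s = 0"
  then obtain q where q: "\<And>s. s \<in> I \<Longrightarrow> (\<alpha> s - q) \<bullet> N s = 0" by blast
  define \<mu> where "\<mu> s = (\<alpha> s - q) \<bullet> B1 s" for s
  define \<nu> where "\<nu> s = (\<alpha> s - q) \<bullet> B2 s" for s
  define l where "l s = (\<alpha> s - q) \<bullet> T s" for s
  have aq: "((\<lambda>s. \<alpha> s - q) has_vector_derivative T s) (at s)" if "s \<in> I" for s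
    using frenet_at[OF fr that] by (auto intro!: derivative_eq_intros)
  have tt: "T s \<bullet> T s = 1" if "s \<in> I" for s
    using frenet_at[OF fr that] by (simp add: dot_square_norm)
  have dl: "(l has_real_derivative 1) (at s)" if s: "s \<in> I" for s
  proof -
    have "(l has_real_derivative (T s \<bullet> T s + (\<alpha> s - q) \<bullet> (k1 s *\<^sub>R N s))) (at s)"
      unfolding l_def by (rule inner_vd[OF aq[OF s]]) (use frenet_at[OF fr s] in blast)
    then show ?thesis using tt[OF s] q[OF s] by simp
  qed
  have "\<exists>c. \<forall>x\<in>I. l x - x = c"
  proof (rule has_field_derivative_zero_constant[OF cvx])
    fix x assume x: "x \<in> I"
    have "((\<lambda>x. l x - x) has_real_derivative 1 - 1) (at x)"
      by (intro DERIV_diff dl[OF x] DERIV_ident)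
    then show "((\<lambda>x. l x - x) has_real_derivative 0) (at x within I)"
      by (simp add: has_field_derivative_at_within)
  qed
  then obtain c where c: "\<And>x. x \<in> I \<Longrightarrow> l x = x + c" by (metis add.commute diff_add_cancel)
  have eq: "k2 s * \<mu> s = k1 s * (s + c)" if s: "s \<in> I" for s
  proof -
    have "((\<lambda>s. (\<alpha> s - q) \<bullet> N s) has_real_derivative
       (T s \<bullet> N s + (\<alpha> s - q) \<bullet> (- k1 s *\<^sub>R T s + k2 s *\<^sub>R B1 s))) (at s)"
      by (rule inner_vd[OF aq[OF s]]) (use frenet_at[OF fr s] in blast)
    then have "T s \<bullet> N s + (\<alpha> s - q) \<bullet> (- k1 s *\<^sub>R T s + k2 s *\<^sub>R B1 s) = 0"
      by (rule deriv_zero_on_open[OF _ I(1) s]) (use q in auto)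
    moreover have "(\<alpha> s - q) \<bullet> (- k1 s *\<^sub>R T s + k2 s *\<^sub>R B1 s) = - k1 s * l s + k2 s * \<mu> s"
      by (simp add: inner_diff_right inner_add_right l_def \<mu>_def)
    moreover have "T s \<bullet> N s = 0" using frenet_at[OF fr s] by blast
    ultimately show ?thesis using c[OF s] by (simp add: algebra_simps)
  qed
  have dmu: "(\<mu> has_real_derivative k3 s * \<nu> s) (at s)" if s: "s \<in> I" for s
  proof -
    have "(\<mu> has_real_derivative (T s \<bullet> B1 s + (\<alpha> s - q) \<bullet> (- k2 s *\<^sub>R N s + k3 s *\<^sub>R B2 s))) (at s)"
      unfolding \<mu>_def by (rule inner_vd[OF aq[OF s]]) (use frenet_at[OF fr s] in blast)
    moreover have "(\<alpha> s - q) \<bullet> (- k2 s *\<^sub>R N s + k3 s *\<^sub>R B2 s) = - k2 s * ((\<alpha> s - q) \<bullet> N s) + k3 s * \<nu> s"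
      by (simp add: inner_diff_right \<nu>_def)
    moreover have "T s \<bullet> B1 s = 0" using frenet_at[OF fr s] by blast
    ultimately show ?thesis using q[OF s] by simp
  qed
  have dnu: "(\<nu> has_real_derivative - k3 s * \<mu> s) (at s)" if s: "s \<in> I" for s
  proof -
    have "(\<nu> has_real_derivative (T s \<bullet> B2 s + (\<alpha> s - q) \<bullet> (- k3 s *\<^sub>R B1 s))) (at s)"
      unfolding \<nu>_def by (rule inner_vd[OF aq[OF s]]) (use frenet_at[OF fr s] in blast)
    moreover have "(\<alpha> s - q) \<bullet> (- k3 s *\<^sub>R B1 s) = - k3 s * \<mu> s"
      by (simp add: \<mu>_def)
    moreover have "T s \<bullet> B2 s = 0" using frenet_at[OF fr s] by blast
    ultimately show ?thesis by (simp add: \<mu>_def)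
  qed
  show "\<exists>c \<mu> \<nu>. \<forall>s\<in>I. (\<mu> has_real_derivative k3 s * \<nu> s) (at s) \<and>
        (\<nu> has_real_derivative - k3 s * \<mu> s) (at s) \<and> k2 s * \<mu> s = k1 s * (s + c)"
    using dmu dnu eq by blast
next
  have cvx: "convex I" using I(2) by (rule is_interval_convex)
  assume "\<exists>c \<mu> \<nu>. \<forall>s\<in>I. (\<mu> has_real_derivative k3 s * \<nu> s) (at s) \<and>
        (\<nu> has_real_derivative - k3 s * \<mu> s) (at s) \<and> k2 s * \<mu> s = k1 s * (s + c)"
  then obtain c \<mu> \<nu> where H: "\<And>s. s \<in> I \<Longrightarrow> (\<mu> has_real_derivative k3 s * \<nu> s) (at s) \<and>
        (\<nu> has_real_derivative - k3 s * \<mu> s) (at s) \<and> k2 s * \<mu> s = k1 s * (s + c)" by blast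
  define p where "p s = \<alpha> s - (s + c) *\<^sub>R T s - \<mu> s *\<^sub>R B1 s - \<nu> s *\<^sub>R B2 s" for s
  have dp: "(p has_vector_derivative 0) (at s)" if s: "s \<in> I" for s
  proof -
    have F: "(\<alpha> has_vector_derivative T s) (at s)" "(T has_vector_derivative (k1 s *\<^sub>R N s)) (at s)"
        "(B1 has_vector_derivative (- k2 s *\<^sub>R N s + k3 s *\<^sub>R B2 s)) (at s)"
        "(B2 has_vector_derivative (- k3 s *\<^sub>R B1 s)) (at s)"
      using frenet_at[OF fr s] by blast+
    have d1: "((\<lambda>s. s + c) has_real_derivative 1) (at s)" by (auto intro!: derivative_eq_intros)
    have "(p has_vector_derivative (T s - ((s + c) *\<^sub>R (k1 s *\<^sub>R N s) + 1 *\<^sub>R T s)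
        - (\<mu> s *\<^sub>R (- k2 s *\<^sub>R N s + k3 s *\<^sub>R B2 s) + (k3 s * \<nu> s) *\<^sub>R B1 s)
        - (\<nu> s *\<^sub>R (- k3 s *\<^sub>R B1 s) + (- k3 s * \<mu> s) *\<^sub>R B2 s))) (at s)"
    proof -
      have a1: "((\<lambda>s. (s + c) *\<^sub>R T s) has_vector_derivative ((s + c) *\<^sub>R (k1 s *\<^sub>R N s) + 1 *\<^sub>R T s)) (at s)"
        by (rule has_vector_derivative_scaleR[OF d1 F(2)])
      have a2: "((\<lambda>s. \<mu> s *\<^sub>R B1 s) has_vector_derivative (\<mu> s *\<^sub>R (- k2 s *\<^sub>R N s + k3 s *\<^sub>R B2 s) + (k3 s * \<nu> s) *\<^sub>R B1 s)) (at s)"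
        by (rule has_vector_derivative_scaleR[OF conjunct1[OF H[OF s]] F(3)])
      have a3: "((\<lambda>s. \<nu> s *\<^sub>R B2 s) has_vector_derivative (\<nu> s *\<^sub>R (- k3 s *\<^sub>R B1 s) + (- k3 s * \<mu> s) *\<^sub>R B2 s)) (at s)"
        by (rule has_vector_derivative_scaleR[OF conjunct1[OF conjunct2[OF H[OF s]]] F(4)])
      have pe: "p = (\<lambda>s. \<alpha> s - (s + c) *\<^sub>R T s - \<mu> s *\<^sub>R B1 s - \<nu> s *\<^sub>R B2 s)"
        by (simp add: fun_eq_iff p_def)
      show ?thesis unfolding pe
        by (rule has_vector_derivative_diff[OF has_vector_derivative_diff[OF has_vector_derivative_diff[OF F(1) a1] a2] a3])
    qed
    moreover have "T s - ((s + c) *\<^sub>R (k1 s *\<^sub>R N s) + 1 *\<^sub>R T s)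
        - (\<mu> s *\<^sub>R (- k2 s *\<^sub>R N s + k3 s *\<^sub>R B2 s) + (k3 s * \<nu> s) *\<^sub>R B1 s)
        - (\<nu> s *\<^sub>R (- k3 s *\<^sub>R B1 s) + (- k3 s * \<mu> s) *\<^sub>R B2 s) = 
        (k2 s * \<mu> s - k1 s * (s + c)) *\<^sub>R N s"
      by (rule vec_alg)
    ultimately show ?thesis using H[OF s] by simp
  qed
  have "\<exists>q. \<forall>x\<in>I. p x = q"
    by (rule has_derivative_zero_constant[OF cvx])
       (use dp in \<open>auto simp: has_vector_derivative_def intro: has_derivative_at_withinI\<close>)
  then obtain q where q: "\<And>x. x \<in> I \<Longrightarrow> p x = q" by blast
  have "(\<alpha> s - q) \<bullet> N s = 0" if s: "s \<in> I" for s
  proof -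
    have "\<alpha> s - q = (s + c) *\<^sub>R T s + \<mu> s *\<^sub>R B1 s + \<nu> s *\<^sub>R B2 s"
      using q[OF s] unfolding p_def by (simp add: algebra_simps)
    moreover have "B1 s \<bullet> N s = 0" "B2 s \<bullet> N s = 0" "T s \<bullet> N s = 0"
      using frenet_at[OF fr s] by (simp_all add: inner_commute)
    ultimately show ?thesis by (simp add: inner_add_left)
  qed
  then show "\<exists>q. \<forall>s\<in>I. (\<alpha> s - q) \<bullet> N s = 0" by blast
qed



lemma cont_zero:
  fixes g :: "real \<Rightarrow> real"
  assumes "open I" "continuous_on I g" "x \<in> I" "\<And>y. y \<in> I \<Longrightarrow> y \<noteq> x \<Longrightarrow> g y = 0"
  shows "g x = 0"
proof -
  have "(g \<longlongrightarrow> g x) (at x)"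
    using assms(1-3) continuous_on_eq_continuous_at isCont_def by blast
  moreover have "eventually (\<lambda>y. g y = 0) (at x)"
  proof -
    have "eventually (\<lambda>y. y \<in> I) (at x)" using assms(1,3) eventually_at_topological by blast
    then show ?thesis unfolding eventually_at_filter using assms(4)
      by (auto elim!: eventually_mono)
  qed
  then have "(g \<longlongrightarrow> 0) (at x)" by (simp add: tendsto_eventually)
  ultimately show ?thesis using tendsto_unique trivial_limit_at by blast
qed

lemma exists_ne:
  fixes I :: "real set"
  assumes "open I" "I \<noteq> {}"
  shows "\<exists>s\<in>I. s + c \<noteq> 0"
proof -
  obtain s0 where s0: "s0 \<in> I" using assms by blast
  then obtain e where e: "e > 0" "ball s0 e \<subseteq> I" using assms(1) open_contains_ball by blast
  have "s0 + e/2 \<in> I" using e by (auto simp: dist_real_def intro!: subsetD[OF e(2)])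
  then show ?thesis using s0 e(1) by (cases "s0 + c = 0") force+
qed

lemma sign_const:
  fixes f :: "real \<Rightarrow> real"
  assumes "is_interval I" "continuous_on I f" "\<And>s. s \<in> I \<Longrightarrow> f s \<noteq> 0" "x \<in> I" "y \<in> I" "f x > 0"
  shows "f y > 0"
proof (rule ccontr)
  assume "\<not> f y > 0"
  then have "f y < 0" using assms(3,5) by force
  have "connected (f ` I)"
    using assms(1,2) connected_continuous_image is_interval_connected by blast
  then have "is_interval (f ` I)" using is_interval_connected_1 by blast
  moreover have "f x \<in> f ` I" "f y \<in> f ` I" using assms(4,5) by auto
  ultimately have "0 \<in> f ` I" using \<open>f y < 0\<close> assms(6)
    unfolding is_interval_1 by (metis less_eq_real_def)
  then show False using assms(3) by auto
qed

lemma polar: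
  fixes U V :: real
  shows "\<exists>A t. U = A * sin t \<and> V = A * cos t"
proof (cases "U^2 + V^2 = 0")
  case True
  then have "U = 0" "V = 0" by (auto simp: sum_power2_eq_zero_iff)
  then show ?thesis by (intro exI[of _ 0]) auto
next
  case False
  define A where "A = sqrt (U^2 + V^2)"
  have "U^2 + V^2 > 0" using False by (metis add_nonneg_nonneg zero_le_power2 less_eq_real_def)
  then have A: "A > 0" by (simp add: A_def)
  have "(V/A)^2 + (U/A)^2 = 1"
  proof -
    have A2: "A^2 = U^2 + V^2" by (simp add: A_def)
    have "(V/A)^2 + (U/A)^2 = (V^2+U^2)/A^2" by (simp add: power_divide add_divide_distrib)
    also have "\<dots> = 1" using A2 A by (metis add.commute divide_self power_not_zero less_irrefl)
    finally show ?thesis .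
  qed
  then obtain t where "V/A = cos t" "U/A = sin t" by (rule sincos_total_2pi)
  then show ?thesis using A by (intro exI[of _ A] exI[of _ t]) (auto simp: field_simps)
qed

lemma rot:
  fixes \<mu> \<nu> :: "real \<Rightarrow> real"
  assumes cvx: "convex I"
    and H: "\<And>s. s \<in> I \<Longrightarrow> (\<mu> has_real_derivative d * \<nu> s) (at s) \<and> (\<nu> has_real_derivative - d * \<mu> s) (at s)"
  shows "\<exists>U V. \<forall>s\<in>I. \<mu> s = U * cos (d * s) + V * sin (d * s)"
proof -
  define u where "u s = \<mu> s * cos (d * s) - \<nu> s * sin (d * s)" for s
  define v where "v s = \<mu> s * sin (d * s) + \<nu> s * cos (d * s)" for s
  have "\<exists>U. \<forall>x\<in>I. u x = U"
  proof (rule has_field_derivative_zero_constant[OF cvx])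
    fix s assume s: "s \<in> I"
    have "(u has_real_derivative 0) (at s)" unfolding u_def[abs_def]
      using H[OF s] by (auto intro!: derivative_eq_intros simp: algebra_simps)
    then show "(u has_real_derivative 0) (at s within I)" by (rule has_field_derivative_at_within)
  qed
  then obtain U where U: "\<And>x. x \<in> I \<Longrightarrow> u x = U" by blast
  have "\<exists>V. \<forall>x\<in>I. v x = V"
  proof (rule has_field_derivative_zero_constant[OF cvx])
    fix s assume s: "s \<in> I"
    have "(v has_real_derivative 0) (at s)" unfolding v_def[abs_def]
      using H[OF s] by (auto intro!: derivative_eq_intros simp: algebra_simps)
    then show "(v has_real_derivative 0) (at s within I)" by (rule has_field_derivative_at_within)
  qed
  then obtain V where V: "\<And>x. x \<in> I \<Longrightarrow> v x = V" by blast
  have "\<mu> s = U * cos (d * s) + V * sin (d * s)" if s: "s \<in> I" for s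
  proof -
    have "U * cos (d * s) + V * sin (d * s) = u s * cos (d * s) + v s * sin (d * s)"
      using U[OF s] V[OF s] by simp
    also have "\<dots> = \<mu> s"
    proof -
      have e: "cos (d * s) * cos (d * s) + sin (d * s) * sin (d * s) = 1"
        using sin_cos_squared_add[of "d * s"] by (simp add: power2_eq_square)
      have "u s * cos (d * s) + v s * sin (d * s) = \<mu> s * (cos (d * s) * cos (d * s) + sin (d * s) * sin (d * s))"
        unfolding u_def v_def by algebra
      then show ?thesis by (simp only: e mult_1_right)
    qed
    finally show ?thesis by simp
  qed
  then show ?thesis by blast
qed


definition RR :: "real set \<Rightarrow> (real \<Rightarrow> real) \<Rightarrow> (real \<Rightarrow> real) \<Rightarrow> (real \<Rightarrow> real) \<Rightarrow> bool" where
  "RR I k1 k2 k3 \<longleftrightarrow> (\<exists>c \<mu> \<nu>. \<forall>s\<in>I. (\<mu> has_real_derivative k3 s * \<nu> s) (at s) \<and>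
        (\<nu> has_real_derivative - k3 s * \<mu> s) (at s) \<and> k2 s * \<mu> s = k1 s * (s + c))"


lemma L1:
  fixes k1 k2 k3 :: "real \<Rightarrow> real"
  assumes "\<kappa>1 > 0" "\<kappa>2 > 0" "\<sigma> = 1 \<or> \<sigma> = -1"
    and H: "\<forall>s\<in>I. k1 s = \<kappa>1 \<and> k2 s = \<kappa>2 \<and> c1 - 2 * c * s - s^2 > 0 \<and> k3 s = \<sigma> / sqrt (c1 - 2 * c * s - s^2)"
  shows "RR I k1 k2 k3"
proof -
  define a where "a = \<kappa>1/\<kappa>2"
  define D where "D s = c1 - 2 * c * s - s^2" for s
  have sq: "\<sigma> * \<sigma> = 1" using assms(3) by auto
  have "((\<lambda>s. a * (s + c)) has_real_derivative k3 s * (a * \<sigma> * sqrt (D s))) (at s) \<and>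
        ((\<lambda>s. a * \<sigma> * sqrt (D s)) has_real_derivative - k3 s * (a * (s + c))) (at s) \<and>
        k2 s * (a * (s + c)) = k1 s * (s + c)" if s: "s \<in> I" for s
  proof (intro conjI)
    have Hs: "k1 s = \<kappa>1 \<and> k2 s = \<kappa>2 \<and> c1 - 2 * c * s - s^2 > 0 \<and> k3 s = \<sigma> / sqrt (c1 - 2 * c * s - s^2)"
      using H s by blast
    have Dp: "D s > 0" and k3: "k3 s = \<sigma> / sqrt (D s)" unfolding D_def using Hs by blast+
    have sD: "sqrt (D s) > 0" using Dp by simp
    have d1: "((\<lambda>s. a * (s + c)) has_real_derivative a) (at s)" by (auto intro!: derivative_eq_intros)
    have e1: "k3 s * (a * \<sigma> * sqrt (D s)) = a"
    proof -
      have "k3 s * (a * \<sigma> * sqrt (D s)) = a * (\<sigma> * \<sigma>) * (sqrt (D s) / sqrt (D s))"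
        unfolding k3 by simp
      then show ?thesis using sD sq by simp
    qed
    show "((\<lambda>s. a * (s + c)) has_real_derivative k3 s * (a * \<sigma> * sqrt (D s))) (at s)"
      unfolding e1 by (rule d1)
    have dD: "(D has_real_derivative (- 2 * c - 2 * s)) (at s)"
      unfolding D_def[abs_def] by (auto intro!: derivative_eq_intros)
    have d2: "((\<lambda>s. a * \<sigma> * sqrt (D s)) has_real_derivative a * \<sigma> * (inverse (sqrt (D s)) / 2 * (- 2 * c - 2 * s))) (at s)"
      by (rule DERIV_cmult[OF DERIV_chain2[OF DERIV_real_sqrt[OF Dp] dD]])
    have e2: "- k3 s * (a * (s + c)) = a * \<sigma> * (inverse (sqrt (D s)) / 2 * (- 2 * c - 2 * s))"
    proof -
      have "a * \<sigma> * (inverse (sqrt (D s)) / 2 * (- 2 * c - 2 * s)) = - (a * \<sigma> * (s + c)) / sqrt (D s)"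
        by (simp add: divide_simps) (simp add: algebra_simps)
      then show ?thesis unfolding k3 by simp
    qed
    show "((\<lambda>s. a * \<sigma> * sqrt (D s)) has_real_derivative - k3 s * (a * (s + c))) (at s)"
      unfolding e2 by (rule d2)
    show "k2 s * (a * (s + c)) = k1 s * (s + c)" using Hs assms(2) by (simp add: a_def)
  qed
  then show ?thesis unfolding RR_def by (intro exI[of _ c] exI[of _ "\<lambda>s. a * (s + c)"] exI[of _ "\<lambda>s. a * \<sigma> * sqrt (D s)"] ballI)
qed



lemma L2:
  fixes k1 k2 k3 :: "real \<Rightarrow> real"
  assumes I: "open I" and cont: "continuous_on I k1" and "\<kappa>2 > 0" "\<kappa>3 \<noteq> 0" "c1 \<noteq> 0"
    and H: "\<forall>s\<in>I. k2 s = \<kappa>2 \<and> k3 s = \<kappa>3 \<and> (s + c \<noteq> 0 \<longrightarrow> k1 s = c1 * sin (\<kappa>3 * s + c2) / (s + c))"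
  shows "RR I k1 k2 k3"
proof -
  have E: "k1 s * (s + c) - c1 * sin (\<kappa>3 * s + c2) = 0" if s: "s \<in> I" for s
  proof (cases "s + c = 0")
    case False then show ?thesis using H s by simp
  next
    case True
    show ?thesis
    proof (rule cont_zero[OF I _ s])
      show "continuous_on I (\<lambda>s. k1 s * (s + c) - c1 * sin (\<kappa>3 * s + c2))"
        by (intro continuous_intros cont)
      fix y assume "y \<in> I" "y \<noteq> s"
      then show "k1 y * (y + c) - c1 * sin (\<kappa>3 * y + c2) = 0" using H True by auto
    qed
  qed
  define m where "m = c1 / \<kappa>2"
  have "((\<lambda>s. m * sin (\<kappa>3 * s + c2)) has_real_derivative k3 s * (m * cos (\<kappa>3 * s + c2))) (at s) \<and>
        ((\<lambda>s. m * cos (\<kappa>3 * s + c2)) has_real_derivative - k3 s * (m * sin (\<kappa>3 * s + c2))) (at s) \<and>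
        k2 s * (m * sin (\<kappa>3 * s + c2)) = k1 s * (s + c)" if s: "s \<in> I" for s
  proof (intro conjI)
    have k3s: "k3 s = \<kappa>3" and k2s: "k2 s = \<kappa>2" using H s by auto
    show "((\<lambda>s. m * sin (\<kappa>3 * s + c2)) has_real_derivative k3 s * (m * cos (\<kappa>3 * s + c2))) (at s)"
      unfolding k3s by (auto intro!: derivative_eq_intros)
    show "((\<lambda>s. m * cos (\<kappa>3 * s + c2)) has_real_derivative - k3 s * (m * sin (\<kappa>3 * s + c2))) (at s)"
      unfolding k3s by (auto intro!: derivative_eq_intros)
    show "k2 s * (m * sin (\<kappa>3 * s + c2)) = k1 s * (s + c)"
      unfolding k2s m_def using E[OF s] assms(3) by simp
  qed
  then show ?thesis unfolding RR_def by (intro exI[of _ c] exI[of _ "\<lambda>s. m * sin (\<kappa>3 * s + c2)"] exI[of _ "\<lambda>s. m * cos (\<kappa>3 * s + c2)"] ballI)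
qed



lemma L3:
  fixes k1 k2 k3 :: "real \<Rightarrow> real"
  assumes I: "open I" and cont: "continuous_on I k2" and pos: "\<forall>s\<in>I. k2 s > 0"
    and "\<kappa>1 > 0" "\<kappa>3 \<noteq> 0" "c2 \<noteq> 0"
    and H: "\<forall>s\<in>I. k1 s = \<kappa>1 \<and> k3 s = \<kappa>3 \<and> (s + c \<noteq> 0 \<longrightarrow> k2 s = c2 * (s + c) * (1 / cos (\<kappa>3 * s + c1)))"
  shows "RR I k1 k2 k3"
proof -
  have E: "k2 s * cos (\<kappa>3 * s + c1) - c2 * (s + c) = 0" if s: "s \<in> I" for s
  proof (cases "s + c = 0")
    case False
    have "cos (\<kappa>3 * s + c1) \<noteq> 0"
    proof
      assume "cos (\<kappa>3 * s + c1) = 0"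
      then have "k2 s = 0" using H s False by simp
      then show False using pos s by auto
    qed
    then show ?thesis using H s False by simp
  next
    case True
    show ?thesis
    proof (rule cont_zero[OF I _ s])
      show "continuous_on I (\<lambda>s. k2 s * cos (\<kappa>3 * s + c1) - c2 * (s + c))"
        by (intro continuous_intros cont)
      fix y assume y: "y \<in> I" "y \<noteq> s"
      then have yc: "y + c \<noteq> 0" using True by auto
      have "cos (\<kappa>3 * y + c1) \<noteq> 0"
      proof
        assume "cos (\<kappa>3 * y + c1) = 0"
        then have "k2 y = 0" using H y yc by simp
        then show False using pos y by auto
      qed
      then show "k2 y * cos (\<kappa>3 * y + c1) - c2 * (y + c) = 0" using H y yc by simp
    qed
  qed
  define m where "m = \<kappa>1 / c2"
  have "((\<lambda>s. m * cos (\<kappa>3 * s + c1)) has_real_derivative k3 s * (- m * sin (\<kappa>3 * s + c1))) (at s) \<and>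
        ((\<lambda>s. - m * sin (\<kappa>3 * s + c1)) has_real_derivative - k3 s * (m * cos (\<kappa>3 * s + c1))) (at s) \<and>
        k2 s * (m * cos (\<kappa>3 * s + c1)) = k1 s * (s + c)" if s: "s \<in> I" for s
  proof (intro conjI)
    have k3s: "k3 s = \<kappa>3" and k1s: "k1 s = \<kappa>1" using H s by auto
    show "((\<lambda>s. m * cos (\<kappa>3 * s + c1)) has_real_derivative k3 s * (- m * sin (\<kappa>3 * s + c1))) (at s)"
      unfolding k3s by (auto intro!: derivative_eq_intros)
    show "((\<lambda>s. - m * sin (\<kappa>3 * s + c1)) has_real_derivative - k3 s * (m * cos (\<kappa>3 * s + c1))) (at s)"
      unfolding k3s by (auto intro!: derivative_eq_intros)
    have "k2 s * cos (\<kappa>3 * s + c1) = c2 * (s + c)" using E[OF s] by simp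
    then show "k2 s * (m * cos (\<kappa>3 * s + c1)) = k1 s * (s + c)"
      unfolding k1s m_def using assms(6) by (simp add: field_simps)
  qed
  then show ?thesis unfolding RR_def by (intro exI[of _ c] exI[of _ "\<lambda>s. m * cos (\<kappa>3 * s + c1)"] exI[of _ "\<lambda>s. - m * sin (\<kappa>3 * s + c1)"] ballI)
qed




lemma F1:
  fixes k1 k2 k3 :: "real \<Rightarrow> real"
  assumes I: "open I" "is_interval I" "I \<noteq> {}" and pos: "\<forall>s\<in>I. k1 s > 0 \<and> k2 s > 0"
    and cont: "continuous_on I k3" and ka: "\<forall>s\<in>I. k1 s = a" and kb: "\<forall>s\<in>I. k2 s = b"
    and R: "RR I k1 k2 k3"
  shows "\<exists>\<kappa>1 \<kappa>2 c c1 \<sigma>. \<kappa>1 > 0 \<and> \<kappa>2 > 0 \<and> (\<sigma> = 1 \<or> \<sigma> = -1) \<and>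
        (\<forall>s\<in>I. k1 s = \<kappa>1 \<and> k2 s = \<kappa>2 \<and> c1 - 2 * c * s - s^2 > 0 \<and>
                 k3 s = \<sigma> / sqrt (c1 - 2 * c * s - s^2))"
proof -
  obtain s0 where s0: "s0 \<in> I" using I(3) by blast
  have a: "a > 0" and b: "b > 0" using pos ka kb s0 by force+
  obtain c \<mu> \<nu> where H: "\<And>s. s \<in> I \<Longrightarrow> (\<mu> has_real_derivative k3 s * \<nu> s) (at s) \<and>
        (\<nu> has_real_derivative - k3 s * \<mu> s) (at s) \<and> k2 s * \<mu> s = k1 s * (s + c)"
    using R unfolding RR_def by blast
  define m where "m = a / b"
  have m: "m > 0" using a b by (simp add: m_def)
  have mu: "\<mu> s = m * (s + c)" if s: "s \<in> I" for s
  proof -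
    have "b * \<mu> s = a * (s + c)" using H[OF s] ka kb s by auto
    then show ?thesis using b by (simp add: m_def field_simps)
  qed
  have k3nu: "k3 s * \<nu> s = m" if s: "s \<in> I" for s
  proof -
    have "((\<lambda>x. m * (x + c)) has_real_derivative m) (at s)" by (auto intro!: derivative_eq_intros)
    then have "(\<mu> has_real_derivative m) (at s)"
      by (rule has_field_derivative_transform_within_open[OF _ I(1) s]) (simp add: mu)
    then show ?thesis using DERIV_unique[OF conjunct1[OF H[OF s]]] by blast
  qed
  have k3nz: "k3 s \<noteq> 0" and nunz: "\<nu> s \<noteq> 0" if s: "s \<in> I" for s
    using k3nu[OF s] m by auto
  define h where "h x = (\<nu> x)^2 / m^2 + x^2 + 2 * c * x" for x
  have "\<exists>c1. \<forall>x\<in>I. h x = c1"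
  proof (rule has_field_derivative_zero_constant[OF is_interval_convex[OF I(2)]])
    fix s assume s: "s \<in> I"
    have "- k3 s * \<mu> s = - ((m^2) * (s + c) / \<nu> s)"
    proof -
      have "k3 s = m / \<nu> s" using k3nu[OF s] nunz[OF s] by (simp add: field_simps)
      then show ?thesis using mu[OF s] by (simp add: power2_eq_square)
    qed
    then have dn: "(\<nu> has_real_derivative - ((m^2) * (s + c) / \<nu> s)) (at s)"
      using H[OF s] by metis
    have "(h has_real_derivative 0) (at s)" unfolding h_def[abs_def]
      using nunz[OF s] m by (auto intro!: derivative_eq_intros dn simp: field_simps)
    then show "(h has_real_derivative 0) (at s within I)" by (rule has_field_derivative_at_within)
  qed
  then obtain c1 where c1: "\<And>x. x \<in> I \<Longrightarrow> h x = c1" by blast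
  define \<sigma> :: real where "\<sigma> = (if k3 s0 > 0 then 1 else -1)"
  have "k1 s = a \<and> k2 s = b \<and> c1 - 2 * c * s - s^2 > 0 \<and> k3 s = \<sigma> / sqrt (c1 - 2 * c * s - s^2)"
    if s: "s \<in> I" for s
  proof -
    have nu: "\<nu> s = m / k3 s" using k3nu[OF s] k3nz[OF s] by (simp add: field_simps)
    have D: "c1 - 2 * c * s - s^2 = 1 / (k3 s)^2"
    proof -
      have "c1 - 2 * c * s - s^2 = (\<nu> s)^2 / m^2" using c1[OF s] unfolding h_def by simp
      also have "\<dots> = 1 / (k3 s)^2" unfolding nu using m by (simp add: power_divide)
      finally show ?thesis .
    qed
    have Dp: "c1 - 2 * c * s - s^2 > 0" unfolding D using k3nz[OF s] by simp
    have sq: "sqrt (c1 - 2 * c * s - s^2) = 1 / \<bar>k3 s\<bar>" unfolding D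
      by (simp add: real_sqrt_divide)
    have sgn: "k3 s > 0 \<longleftrightarrow> k3 s0 > 0"
      using sign_const[OF I(2) cont _ s s0] sign_const[OF I(2) cont _ s0 s] k3nz by blast
    have "k3 s = \<sigma> / sqrt (c1 - 2 * c * s - s^2)"
      unfolding sq \<sigma>_def using sgn k3nz[OF s] by auto
    then show ?thesis using ka kb s Dp by auto
  qed
  then show ?thesis using a b unfolding \<sigma>_def
    by (intro exI[of _ a] exI[of _ b] exI[of _ c] exI[of _ c1] exI[of _ \<sigma>]) (auto simp: \<sigma>_def)
qed



lemma F2:
  fixes k1 k2 k3 :: "real \<Rightarrow> real"
  assumes I: "open I" "is_interval I" "I \<noteq> {}" and pos: "\<forall>s\<in>I. k1 s > 0 \<and> k2 s > 0"
    and kb: "\<forall>s\<in>I. k2 s = b" and kd: "\<forall>s\<in>I. k3 s = d" and nz: "\<exists>s\<in>I. k3 s \<noteq> 0"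
    and R: "RR I k1 k2 k3"
  shows "\<exists>\<kappa>2 \<kappa>3 c c1 c2. \<kappa>2 > 0 \<and> \<kappa>3 \<noteq> 0 \<and> c1 \<noteq> 0 \<and>
        (\<forall>s\<in>I. k2 s = \<kappa>2 \<and> k3 s = \<kappa>3 \<and>
                 (s + c \<noteq> 0 \<longrightarrow> k1 s = c1 * sin (\<kappa>3 * s + c2) / (s + c)))"
proof -
  obtain s0 where s0: "s0 \<in> I" using I(3) by blast
  have b: "b > 0" using pos kb s0 by force
  have d: "d \<noteq> 0" using nz kd by force
  obtain c \<mu> \<nu> where H: "\<And>s. s \<in> I \<Longrightarrow> (\<mu> has_real_derivative k3 s * \<nu> s) (at s) \<and>
        (\<nu> has_real_derivative - k3 s * \<mu> s) (at s) \<and> k2 s * \<mu> s = k1 s * (s + c)"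
    using R unfolding RR_def by blast
  have H': "(\<mu> has_real_derivative d * \<nu> s) (at s) \<and> (\<nu> has_real_derivative - d * \<mu> s) (at s)"
    if s: "s \<in> I" for s
    using H[OF s] kd s by auto
  obtain U V where UV: "\<And>s. s \<in> I \<Longrightarrow> \<mu> s = U * cos (d * s) + V * sin (d * s)"
    using rot[OF is_interval_convex[OF I(2)] H'] by blast
  obtain A t where At: "U = A * sin t" "V = A * cos t" using polar by blast
  have mu: "\<mu> s = A * sin (d * s + t)" if s: "s \<in> I" for s
    using UV[OF s] At by (simp add: sin_add algebra_simps)
  have eqk: "k1 s * (s + c) = b * A * sin (d * s + t)" if s: "s \<in> I" for s
    using H[OF s] kb s mu[OF s] by auto
  obtain s1 where s1: "s1 \<in> I" "s1 + c \<noteq> 0" using exists_ne[OF I(1) I(3)] by blast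
  have "k1 s1 * (s1 + c) \<noteq> 0" using pos s1 by auto
  then have A: "A \<noteq> 0" using eqk[OF s1(1)] by auto
  have "k2 s = b \<and> k3 s = d \<and> (s + c \<noteq> 0 \<longrightarrow> k1 s = (b * A) * sin (d * s + t) / (s + c))"
    if s: "s \<in> I" for s
    using kb kd s eqk[OF s] by (auto simp: field_simps)
  then show ?thesis using b d A
    by (intro exI[of _ b] exI[of _ d] exI[of _ c] exI[of _ "b * A"] exI[of _ t]) auto
qed

lemma F3:
  fixes k1 k2 k3 :: "real \<Rightarrow> real"
  assumes I: "open I" "is_interval I" "I \<noteq> {}" and pos: "\<forall>s\<in>I. k1 s > 0 \<and> k2 s > 0"
    and ka: "\<forall>s\<in>I. k1 s = a" and kd: "\<forall>s\<in>I. k3 s = d" and nz: "\<exists>s\<in>I. k3 s \<noteq> 0"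
    and R: "RR I k1 k2 k3"
  shows "\<exists>\<kappa>1 \<kappa>3 c c1 c2. \<kappa>1 > 0 \<and> \<kappa>3 \<noteq> 0 \<and> c2 \<noteq> 0 \<and>
        (\<forall>s\<in>I. k1 s = \<kappa>1 \<and> k3 s = \<kappa>3 \<and>
                 (s + c \<noteq> 0 \<longrightarrow> k2 s = c2 * (s + c) * (1 / cos (\<kappa>3 * s + c1))))"
proof -
  obtain s0 where s0: "s0 \<in> I" using I(3) by blast
  have a: "a > 0" using pos ka s0 by force
  have d: "d \<noteq> 0" using nz kd by force
  obtain c \<mu> \<nu> where H: "\<And>s. s \<in> I \<Longrightarrow> (\<mu> has_real_derivative k3 s * \<nu> s) (at s) \<and>
        (\<nu> has_real_derivative - k3 s * \<mu> s) (at s) \<and> k2 s * \<mu> s = k1 s * (s + c)"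
    using R unfolding RR_def by blast
  have H': "(\<mu> has_real_derivative d * \<nu> s) (at s) \<and> (\<nu> has_real_derivative - d * \<mu> s) (at s)"
    if s: "s \<in> I" for s
    using H[OF s] kd s by auto
  obtain U V where UV: "\<And>s. s \<in> I \<Longrightarrow> \<mu> s = U * cos (d * s) + V * sin (d * s)"
    using rot[OF is_interval_convex[OF I(2)] H'] by blast
  obtain A t where At: "- V = A * sin t" "U = A * cos t" using polar by blast
  have mu: "\<mu> s = A * cos (d * s + t)" if s: "s \<in> I" for s
  proof -
    have "V = - (A * sin t)" using At(1) by simp
    then show ?thesis using UV[OF s] At(2) by (simp add: cos_add algebra_simps)
  qed
  have eqk: "k2 s * (A * cos (d * s + t)) = a * (s + c)" if s: "s \<in> I" for s
    using H[OF s] ka s mu[OF s] by auto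
  obtain s1 where s1: "s1 \<in> I" "s1 + c \<noteq> 0" using exists_ne[OF I(1) I(3)] by blast
  have "a * (s1 + c) \<noteq> 0" using a s1 by auto
  then have A: "A \<noteq> 0" using eqk[OF s1(1)] by auto
  have "k1 s = a \<and> k3 s = d \<and> (s + c \<noteq> 0 \<longrightarrow> k2 s = (a / A) * (s + c) * (1 / cos (d * s + t)))"
    if s: "s \<in> I" for s
  proof (intro conjI impI)
    show "k1 s = a" "k3 s = d" using ka kd s by auto
    assume sc: "s + c \<noteq> 0"
    have "k2 s * (A * cos (d * s + t)) \<noteq> 0" using eqk[OF s] sc a by simp
    then have cz: "cos (d * s + t) \<noteq> 0" by auto
    show "k2 s = (a / A) * (s + c) * (1 / cos (d * s + t))"
      using eqk[OF s] cz A by (simp add: field_simps)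
  qed
  then show ?thesis using a d A
    by (intro exI[of _ a] exI[of _ d] exI[of _ c] exI[of _ t] exI[of _ "a / A"]) auto
qed


theorem theorem3p3:
  fixes I :: "real set" and \<alpha> T N B1 B2 :: "real \<Rightarrow> real^4" and k1 k2 k3 :: "real \<Rightarrow> real"
  assumes I: "open I" "is_interval I" "I \<noteq> {}"
    and frenet: "frenet_curve_E4 I \<alpha> T N B1 B2 k1 k2 k3"
    and smooth: "continuous_on I k1" "continuous_on I k2" "continuous_on I k3"
    and nonzero: "\<exists>s\<in>I. k1 s \<noteq> 0" "\<exists>s\<in>I. k2 s \<noteq> 0" "\<exists>s\<in>I. k3 s \<noteq> 0"
    and two_const:
      "((\<exists>a. \<forall>s\<in>I. k1 s = a) \<and> (\<exists>b. \<forall>s\<in>I. k2 s = b)) \<or>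
       ((\<exists>b. \<forall>s\<in>I. k2 s = b) \<and> (\<exists>d. \<forall>s\<in>I. k3 s = d)) \<or>
       ((\<exists>a. \<forall>s\<in>I. k1 s = a) \<and> (\<exists>d. \<forall>s\<in>I. k3 s = d))"
  shows "congruent_to_rectifying I \<alpha> \<longleftrightarrow>
     (\<exists>\<kappa>1 \<kappa>2 c c1 \<sigma>. \<kappa>1 > 0 \<and> \<kappa>2 > 0 \<and> (\<sigma> = 1 \<or> \<sigma> = -1) \<and>
        (\<forall>s\<in>I. k1 s = \<kappa>1 \<and> k2 s = \<kappa>2 \<and> c1 - 2 * c * s - s^2 > 0 \<and>
                 k3 s = \<sigma> / sqrt (c1 - 2 * c * s - s^2))) \<or>
     (\<exists>\<kappa>2 \<kappa>3 c c1 c2. \<kappa>2 > 0 \<and> \<kappa>3 \<noteq> 0 \<and> c1 \<noteq> 0 \<and>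
        (\<forall>s\<in>I. k2 s = \<kappa>2 \<and> k3 s = \<kappa>3 \<and>
                 (s + c \<noteq> 0 \<longrightarrow> k1 s = c1 * sin (\<kappa>3 * s + c2) / (s + c)))) \<or>
     (\<exists>\<kappa>1 \<kappa>3 c c1 c2. \<kappa>1 > 0 \<and> \<kappa>3 \<noteq> 0 \<and> c2 \<noteq> 0 \<and>
        (\<forall>s\<in>I. k1 s = \<kappa>1 \<and> k3 s = \<kappa>3 \<and>
                 (s + c \<noteq> 0 \<longrightarrow> k2 s = c2 * (s + c) * (1 / cos (\<kappa>3 * s + c1)))))" (is "_ \<longleftrightarrow> ?R")
proof -
  have pos: "\<forall>s\<in>I. k1 s > 0 \<and> k2 s > 0" using frenet_at[OF frenet] by blast
  have eq: "congruent_to_rectifying I \<alpha> \<longleftrightarrow> RR I k1 k2 k3"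
    using rect_iff[OF frenet I(1)] rect_R[OF frenet I(1) I(2)] unfolding RR_def by simp
  show ?thesis unfolding eq
  proof
    assume R: "RR I k1 k2 k3"
    from two_const show "?R"
    proof (elim disjE conjE exE)
      fix a b assume "\<forall>s\<in>I. k1 s = a" "\<forall>s\<in>I. k2 s = b"
      then show ?R using F1[OF I pos smooth(3) _ _ R] by blast
    next
      fix b d assume "\<forall>s\<in>I. k2 s = b" "\<forall>s\<in>I. k3 s = d"
      then show ?R using F2[OF I pos _ _ nonzero(3) R] by blast
    next
      fix a d assume "\<forall>s\<in>I. k1 s = a" "\<forall>s\<in>I. k3 s = d"
      then show ?R using F3[OF I pos _ _ nonzero(3) R] by blast
    qed
  next
    assume "?R"
    then show "RR I k1 k2 k3"
    proof (elim disjE)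
      assume "\<exists>\<kappa>1 \<kappa>2 c c1 \<sigma>. \<kappa>1 > 0 \<and> \<kappa>2 > 0 \<and> (\<sigma> = 1 \<or> \<sigma> = -1) \<and>
        (\<forall>s\<in>I. k1 s = \<kappa>1 \<and> k2 s = \<kappa>2 \<and> c1 - 2 * c * s - s^2 > 0 \<and>
                 k3 s = \<sigma> / sqrt (c1 - 2 * c * s - s^2))"
      then show ?thesis using L1 by blast
    next
      assume "\<exists>\<kappa>2 \<kappa>3 c c1 c2. \<kappa>2 > 0 \<and> \<kappa>3 \<noteq> 0 \<and> c1 \<noteq> 0 \<and>
        (\<forall>s\<in>I. k2 s = \<kappa>2 \<and> k3 s = \<kappa>3 \<and>
                 (s + c \<noteq> 0 \<longrightarrow> k1 s = c1 * sin (\<kappa>3 * s + c2) / (s + c)))"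
      then show ?thesis using L2[OF I(1) smooth(1)] by blast
    next
      assume "\<exists>\<kappa>1 \<kappa>3 c c1 c2. \<kappa>1 > 0 \<and> \<kappa>3 \<noteq> 0 \<and> c2 \<noteq> 0 \<and>
        (\<forall>s\<in>I. k1 s = \<kappa>1 \<and> k3 s = \<kappa>3 \<and>
                 (s + c \<noteq> 0 \<longrightarrow> k2 s = c2 * (s + c) * (1 / cos (\<kappa>3 * s + c1))))"
      moreover have "\<forall>s\<in>I. k2 s > 0" using pos by blast
      ultimately show ?thesis using L3[OF I(1) smooth(2)] by blast
    qed
  qed
qed

end
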